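(* Let $c\neq-\frac{22}{5}$. For all integers $n\ge1$, the following identity holds in $\mathcal{W}^c_3$: $$U_{0,0}\circ_0\partial^{n-1}W-\frac{64}{22+5c}\partial^n(:LLW:)+\frac{64}{22+5c}\partial^{n-1}(:(\partial L)LW:)-\frac{10(14+c)}{3(22+5c)}\partial^{n+2}(:LW:)$$ $$+\frac{86+5c}{22+5c}\partial^{n+1}(:(\partial L)W:)-\frac{26+3c}{22+5c}\partial^n(:(\partial^2L)W:)+\frac{2(c-2)}{3(22+5c)}\partial^{n-1}(:(\partial^3L)W:)-\frac{-186+11c+c^2}{36(22+5c)}\partial^{n+4}W=0.$$
   Context: For vertex algebra elements, $a(z)b(w)\sim\sum_{n\ge0}(a\circ_nb)(w)(z-w)^{-n-1}$ and $:ab:$ is the normally ordered product; iterated products are nested to the right, e.g. $:LLW:=\,:L(:LW:):$. For $c\ne-\frac{22}{5}$, $\mathcal{W}^c_3$ is the vertex algebra strongly generated by a Virasoro field $L$ and a weight $3$ primary field $W$ with OPEs $L(z)L(w)\sim \frac c2(z-w)^{-4}+2L(w)(z-w)^{-2}+\partial L(w)(z-w)^{-1}$, $L(z)W(w)\sim 3W(w)(z-w)^{-2}+\partial W(w)(z-w)^{-1}$, $W(z)W(w)\sim \frac c3(z-w)^{-6}+2L(w)(z-w)^{-4}+\partial L(w)(z-w)^{-3}+\big(\frac{32}{22+5c}:LL:+\frac{3(c-2)}{2(22+5c)}\partial^2L\big)(w)(z-w)^{-2}+\big(\frac{32}{22+5c}:(\partial L)L:+\frac{c-2}{3(22+5c)}\partial^3L\big)(w)(z-w)^{-1}$.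 $U_{0,0}=\,:WW:$. *)

theory Defs
  imports Complex_Main
begin

text \<open>The underlying space is a type 'v with addition; the scalar action is the parameter sm,
  the vacuum vector is vac, and pr n a b is the n-th product a_(n) b for all integers n.\<close>

definition cvector_space :: "(complex \<Rightarrow> 'v::ab_group_add \<Rightarrow> 'v) \<Rightarrow> bool" where
  "cvector_space sm \<longleftrightarrow>
     (\<forall>x. sm 1 x = x) \<and>
     (\<forall>s t x. sm (s * t) x = sm s (sm t x)) \<and>
     (\<forall>s t x. sm (s + t) x = sm s x + sm t x) \<and>
     (\<forall>s x y. sm s (x + y) = sm s x + sm s y)"

definition vertex_algebra ::
  "(complex \<Rightarrow> 'v::ab_group_add \<Rightarrow> 'v) \<Rightarrow> 'v \<Rightarrow> (int \<Rightarrow> 'v \<Rightarrow> 'v \<Rightarrow> 'v) \<Rightarrow> bool" where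
  "vertex_algebra sm vac pr \<longleftrightarrow>
     cvector_space sm \<and>
     \<comment> \<open>bilinearity of all n-th products\<close>
     (\<forall>n a b x. pr n (a + b) x = pr n a x + pr n b x) \<and>
     (\<forall>n a x y. pr n a (x + y) = pr n a x + pr n a y) \<and>
     (\<forall>n t a x. pr n (sm t a) x = sm t (pr n a x)) \<and>
     (\<forall>n t a x. pr n a (sm t x) = sm t (pr n a x)) \<and>
     \<comment> \<open>truncation (field axiom)\<close>
     (\<forall>a b. \<exists>N::int. \<forall>n\<ge>N. pr n a b = 0) \<and>
     \<comment> \<open>vacuum axioms\<close>
     (\<forall>n a. pr n vac a = (if n = -1 then a else 0)) \<and>
     (\<forall>n a. n \<ge> 0 \<longrightarrow> pr n a vac = 0) \<and>
     (\<forall>a. pr (-1) a vac = a) \<and>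
     \<comment> \<open>Borcherds identity (both sums are finite by truncation)\<close>
     (\<forall>(m::int) (n::int) (k::int) a b x. \<exists>N0::nat. \<forall>N\<ge>N0.
        (\<Sum>j<N. sm ((of_int m :: complex) gchoose j)
                    (pr (m + k - int j) (pr (n + int j) a b) x))
        = (\<Sum>j<N. sm ((-1) ^ j * ((of_int n :: complex) gchoose j))
                    (pr (m + n - int j) a (pr (k + int j) b x)
                     - sm (if even n then 1 else -1) (pr (n + k - int j) b (pr (m + int j) a x)))))"

definition vderiv :: "(int \<Rightarrow> 'v \<Rightarrow> 'v \<Rightarrow> 'v) \<Rightarrow> 'v \<Rightarrow> 'v \<Rightarrow> 'v" where
  "vderiv pr vac a = pr (-2) a vac"

definition nop :: "(int \<Rightarrow> 'v \<Rightarrow> 'v \<Rightarrow> 'v) \<Rightarrow> 'v \<Rightarrow> 'v \<Rightarrow> 'v" where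
  "nop pr a b = pr (-1) a b"

end

theory Submission imports Defs begin

type_synonym wd = "(bool \<times> int) list"

definition scl :: "complex \<Rightarrow> (complex \<times> wd) list \<Rightarrow> (complex \<times> wd) list" where
  "scl t xs = map (\<lambda>(a,w). (t*a, w)) xs"

definition pfx :: "bool \<times> int \<Rightarrow> (complex \<times> wd) list \<Rightarrow> (complex \<times> wd) list" where
  "pfx x xs = map (\<lambda>(a,w). (a, x#w)) xs"

definition bind2 :: "(complex \<times> wd) list \<Rightarrow> (wd \<Rightarrow> (complex \<times> wd) list) \<Rightarrow> (complex \<times> wd) list" where
  "bind2 ys g = concat (map (\<lambda>(a,u). scl a (g u)) ys)"

lemma scl_Nil[simp]: "scl t [] = []" by (simp add: scl_def)
lemma scl_Cons[simp]: "scl t ((a,w)#xs) = (t*a,w) # scl t xs" by (simp add: scl_def)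
lemma scl_app[simp]: "scl t (xs @ ys) = scl t xs @ scl t ys" by (simp add: scl_def)
lemma pfx_Nil[simp]: "pfx x [] = []" by (simp add: pfx_def)
lemma pfx_Cons[simp]: "pfx x ((a,w)#xs) = (a, x#w) # pfx x xs" by (simp add: pfx_def)
lemma pfx_app[simp]: "pfx x (xs @ ys) = pfx x xs @ pfx x ys" by (simp add: pfx_def)

lemma bind2_Nil[simp]: "bind2 [] g = []" by (simp add: bind2_def)
lemma bind2_Cons[simp]: "bind2 ((a,u)#ys) g = scl a (g u) @ bind2 ys g" by (simp add: bind2_def)
lemma bind2_cong[cong]: "ys = ys' \<Longrightarrow> bind2 ys g = bind2 ys' g" by simp

fun ins :: "nat \<Rightarrow> bool \<times> int \<Rightarrow> wd \<Rightarrow> (complex \<times> wd) list" where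
  "ins 0 x w = [(1, x#w)]"
| "ins (Suc f) x [] = (if 0 \<le> snd x then [] else [(1,[x])])"
| "ins (Suc f) x (y#w') =
      (if \<not> fst x \<and> fst y then
         bind2 (ins f x w') (\<lambda>u. ins f y u) @ scl (of_int (snd x - 2 * snd y)) (ins f (False, snd x + snd y - 1) w')
       else if fst x \<and> fst y \<and> snd y < snd x \<and> snd x + snd y \<noteq> 2 then
         bind2 (ins f x w') (\<lambda>u. ins f y u) @ scl (of_int (snd x - snd y)) (ins f (True, snd x + snd y - 1) w')
       else [(1, x#y#w')])"

definition fuel :: nat where "fuel = Suc (Suc (Suc (Suc (Suc (Suc (Suc (Suc (Suc (Suc (Suc (Suc 0)))))))))))"

primrec nw :: "nat \<Rightarrow> wd \<Rightarrow> (complex \<times> wd) list" where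
  "nw f [] = [(1,[])]"
| "nw f (x#w) = bind2 (nw f w) (\<lambda>u. ins f x u)"

definition nl :: "nat \<Rightarrow> (complex \<times> wd) list \<Rightarrow> (complex \<times> wd) list" where
  "nl f xs = bind2 xs (nw f)"

primrec Dw :: "wd \<Rightarrow> (complex \<times> wd) list" where
  "Dw [] = []"
| "Dw (x#w) = pfx x (Dw w) @ [(- of_int (snd x), (fst x, snd x - 1) # w)]"

definition Dl :: "(complex \<times> wd) list \<Rightarrow> (complex \<times> wd) list" where
  "Dl xs = bind2 xs Dw"

fun insm :: "complex \<times> wd \<Rightarrow> (complex \<times> wd) list \<Rightarrow> (complex \<times> wd) list" where
  "insm p [] = [p]"
| "insm p (q#ys) = (if snd p = snd q then (fst p + fst q, snd q) # ys else q # insm p ys)"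

definition merge :: "(complex \<times> wd) list \<Rightarrow> (complex \<times> wd) list" where
  "merge xs = foldr insm xs []"

locale va =
  fixes sm :: "complex \<Rightarrow> 'v::ab_group_add \<Rightarrow> 'v" and vac :: 'v and pr :: "int \<Rightarrow> 'v \<Rightarrow> 'v \<Rightarrow> 'v"
  assumes VA: "vertex_algebra sm vac pr"
begin

lemma cv: "cvector_space sm" using VA unfolding vertex_algebra_def by simp

sublocale module sm
  using cv unfolding cvector_space_def by unfold_locales (auto simp: mult.commute)

lemma add1: "pr n (a + b) x = pr n a x + pr n b x"
  using VA unfolding vertex_algebra_def by simp
lemma add2: "pr n a (x + y) = pr n a x + pr n a y"
  using VA unfolding vertex_algebra_def by simp
lemma sm1: "pr n (sm t a) x = sm t (pr n a x)"
  using VA unfolding vertex_algebra_def by simp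
lemma sm2: "pr n a (sm t x) = sm t (pr n a x)"
  using VA unfolding vertex_algebra_def by simp
lemma vacl: "pr n vac a = (if n = -1 then a else 0)"
  using VA unfolding vertex_algebra_def by simp
lemma vacr: "n \<ge> 0 \<Longrightarrow> pr n a vac = 0"
  using VA unfolding vertex_algebra_def by simp
lemma vacm1: "pr (-1) a vac = a"
  using VA unfolding vertex_algebra_def by simp

lemma borch: "\<exists>N0::nat. \<forall>N\<ge>N0.
        (\<Sum>j<N. sm ((of_int m :: complex) gchoose j)
                    (pr (m + k - int j) (pr (n + int j) a b) x))
        = (\<Sum>j<N. sm ((-1) ^ j * ((of_int n :: complex) gchoose j))
                    (pr (m + n - int j) a (pr (k + int j) b x)
                     - sm (if even n then 1 else -1) (pr (n + k - int j) b (pr (m + int j) a x))))"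
  using VA unfolding vertex_algebra_def by simp

lemma pr0l[simp]: "pr n 0 x = 0"
proof -
  have "pr n (0+0) x = pr n 0 x + pr n 0 x" by (rule add1)
  thus ?thesis by simp
qed
lemma pr0r[simp]: "pr n a 0 = 0"
proof -
  have "pr n a (0+0) = pr n a 0 + pr n a 0" by (rule add2)
  thus ?thesis by simp
qed
lemma negl: "pr n (- a) x = - pr n a x"
  by (metis add1 add.right_inverse add_eq_0_iff pr0l)
lemma negr: "pr n a (- x) = - pr n a x"
  by (metis add2 add.right_inverse add_eq_0_iff pr0r)
lemma diffl: "pr n (a - b) x = pr n a x - pr n b x"
  by (simp only: diff_conv_add_uminus add1 negl)
lemma diffr: "pr n a (x - y) = pr n a x - pr n a y"
  by (simp only: diff_conv_add_uminus add2 negr)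

lemma sum_trunc:
  fixes f :: "nat \<Rightarrow> 'v"
  assumes "\<And>j. j \<ge> K \<Longrightarrow> f j = 0" "K \<le> N"
  shows "(\<Sum>j<N. f j) = (\<Sum>j<K. f j)"
  by (rule sum.mono_neutral_right) (use assms in auto)

abbreviation D where "D x \<equiv> vderiv pr vac x"

lemma Dvac[simp]: "D vac = 0" by (simp add: vderiv_def vacl)
lemma Dadd: "D (x + y) = D x + D y" by (simp add: vderiv_def add1)
lemma Dsm: "D (sm t x) = sm t (D x)" by (simp add: vderiv_def sm1)
lemma Ddiff: "D (x - y) = D x - D y" by (simp add: vderiv_def diffl)
lemma D0[simp]: "D 0 = 0" by (simp add: vderiv_def)

lemma D_pr: "D (pr n a b) = pr n a (D b) - sm (of_int n) (pr (n-1) a b)"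
proof -
  obtain N0 where H: "\<forall>N\<ge>N0.
        (\<Sum>j<N. sm ((of_int 0 :: complex) gchoose j)
                    (pr (0 + (-2) - int j) (pr (n + int j) a b) vac))
        = (\<Sum>j<N. sm ((-1) ^ j * ((of_int n :: complex) gchoose j))
                    (pr (0 + n - int j) a (pr (-2 + int j) b vac)
                     - sm (if even n then 1 else -1) (pr (n + (-2) - int j) b (pr (0 + int j) a vac))))"
    using borch[of 0 "-2" n a b vac] by blast
  define N where "N = max N0 2"
  have e: "(\<Sum>j<N. sm ((of_int 0 :: complex) gchoose j)
                    (pr (0 + (-2) - int j) (pr (n + int j) a b) vac))
        = (\<Sum>j<N. sm ((-1) ^ j * ((of_int n :: complex) gchoose j))
                    (pr (0 + n - int j) a (pr (-2 + int j) b vac)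
                     - sm (if even n then 1 else -1) (pr (n + (-2) - int j) b (pr (0 + int j) a vac))))"
    using H N_def by auto
  have l: "(\<Sum>j<N. sm ((of_int 0 :: complex) gchoose j)
                    (pr (0 + (-2) - int j) (pr (n + int j) a b) vac)) = D (pr n a b)"
    apply (subst sum_trunc[where K=1])
    by (auto simp: gbinomial_0_left N_def vderiv_def)
  have r: "(\<Sum>j<N. sm ((-1) ^ j * ((of_int n :: complex) gchoose j))
                    (pr (0 + n - int j) a (pr (-2 + int j) b vac)
                     - sm (if even n then 1 else -1) (pr (n + (-2) - int j) b (pr (0 + int j) a vac))))
         = pr n a (D b) - sm (of_int n) (pr (n-1) a b)"
    apply (subst sum_trunc[where K=2])
      apply (auto simp: N_def vacr)
    apply (simp add: eval_nat_numeral vderiv_def vacm1)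
    done
  show ?thesis using e l r by simp
qed

lemma gm2: "(-1) ^ j * ((-2 :: complex) gchoose j) = of_nat j + 1"
proof -
  have "((-2 :: complex) gchoose j) = (-1)^j * ((2 + of_nat j - 1) gchoose j)"
    using gbinomial_minus[of "2::complex" j] by simp
  also have "(2 + of_nat j - 1 :: complex) = of_nat (Suc j)" by simp
  also have "(of_nat (Suc j) :: complex) gchoose j = of_nat (Suc j)"
    by (metis binomial_gbinomial binomial_Suc_n)
  finally show ?thesis by simp
qed

lemma pr_D: "pr k (D a) x = - sm (of_int k) (pr (k-1) a x)"
proof -
  obtain N0 where H: "\<forall>N\<ge>N0.
        (\<Sum>j<N. sm ((of_int 0 :: complex) gchoose j)
                    (pr (0 + k - int j) (pr (-2 + int j) a vac) x))
        = (\<Sum>j<N. sm ((-1) ^ j * ((of_int (-2) :: complex) gchoose j))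
                    (pr (0 + (-2) - int j) a (pr (k + int j) vac x)
                     - sm (if even (-2::int) then 1 else -1) (pr ((-2) + k - int j) vac (pr (0 + int j) a x))))"
    using borch[of 0 k "-2" a vac x] by blast
  define N where "N = max N0 (nat \<bar>k\<bar> + 1)"
  have e: "(\<Sum>j<N. sm ((of_int 0 :: complex) gchoose j)
                    (pr (0 + k - int j) (pr (-2 + int j) a vac) x))
        = (\<Sum>j<N. sm ((-1) ^ j * ((of_int (-2) :: complex) gchoose j))
                    (pr (0 + (-2) - int j) a (pr (k + int j) vac x)
                     - sm (if even (-2::int) then 1 else -1) (pr ((-2) + k - int j) vac (pr (0 + int j) a x))))"
    using H N_def by auto
  have l: "(\<Sum>j<N. sm ((of_int 0 :: complex) gchoose j)
                    (pr (0 + k - int j) (pr (-2 + int j) a vac) x)) = pr k (D a) x"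
    apply (subst sum_trunc[where K=1])
    by (auto simp: gbinomial_0_left N_def vderiv_def)
  have r: "(\<Sum>j<N. sm ((-1) ^ j * ((of_int (-2) :: complex) gchoose j))
                    (pr (0 + (-2) - int j) a (pr (k + int j) vac x)
                     - sm (if even (-2::int) then 1 else -1) (pr ((-2) + k - int j) vac (pr (0 + int j) a x))))
        = - sm (of_int k) (pr (k-1) a x)"
  proof (cases "k \<ge> 1")
    case True
    define j0 where "j0 = nat (k - 1)"
    have j0: "j0 < N" using True by (simp add: j0_def N_def)
    have "(\<Sum>j<N. sm ((-1) ^ j * ((of_int (-2) :: complex) gchoose j))
                    (pr (0 + (-2) - int j) a (pr (k + int j) vac x)
                     - sm (if even (-2::int) then 1 else -1) (pr ((-2) + k - int j) vac (pr (0 + int j) a x))))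
        = (\<Sum>j<N. if j = j0 then - sm (of_nat j0 + 1) (pr (int j0) a x) else 0)"
      apply (rule sum.cong, simp)
      using True by (auto simp: vacl gm2 j0_def)
    also have "\<dots> = - sm (of_nat j0 + 1) (pr (int j0) a x)" using j0 by simp
    finally show ?thesis using True by (simp add: j0_def of_nat_nat)
  next
    case False
    show ?thesis
    proof (cases "k \<le> -1")
      case True
      define j0 where "j0 = nat (-1 - k)"
      have j0: "j0 < N" using True by (simp add: j0_def N_def)
      have "(\<Sum>j<N. sm ((-1) ^ j * ((of_int (-2) :: complex) gchoose j))
                    (pr (0 + (-2) - int j) a (pr (k + int j) vac x)
                     - sm (if even (-2::int) then 1 else -1) (pr ((-2) + k - int j) vac (pr (0 + int j) a x))))
        = (\<Sum>j<N. if j = j0 then sm (of_nat j0 + 1) (pr (-2 - int j0) a x) else 0)"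
        apply (rule sum.cong, simp)
        using True by (auto simp: vacl gm2 j0_def)
      also have "\<dots> = sm (of_nat j0 + 1) (pr (-2 - int j0) a x)" using j0 by simp
      finally show ?thesis using True
        by (simp add: j0_def of_nat_nat)
    next
      case False2: False
      with False have "k = 0" by simp
      then show ?thesis
        by (simp add: vacl)
    qed
  qed
  show ?thesis using e l r by simp
qed

lemma comm:
  assumes J: "\<And>j. j \<ge> J \<Longrightarrow> pr (int j) a b = 0"
  shows "pr m a (pr k b x) - pr k b (pr m a x)
       = (\<Sum>j<J. sm ((of_int m :: complex) gchoose j) (pr (m + k - int j) (pr (int j) a b) x))"
proof -
  obtain N0 where H: "\<forall>N\<ge>N0.
        (\<Sum>j<N. sm ((of_int m :: complex) gchoose j)
                    (pr (m + k - int j) (pr (0 + int j) a b) x))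
        = (\<Sum>j<N. sm ((-1) ^ j * ((of_int 0 :: complex) gchoose j))
                    (pr (m + 0 - int j) a (pr (k + int j) b x)
                     - sm (if even (0::int) then 1 else -1) (pr (0 + k - int j) b (pr (m + int j) a x))))"
    using borch[of m k 0 a b x] by blast
  define N where "N = max N0 (J + 1)"
  have e: "(\<Sum>j<N. sm ((of_int m :: complex) gchoose j)
                    (pr (m + k - int j) (pr (0 + int j) a b) x))
        = (\<Sum>j<N. sm ((-1) ^ j * ((of_int 0 :: complex) gchoose j))
                    (pr (m + 0 - int j) a (pr (k + int j) b x)
                     - sm (if even (0::int) then 1 else -1) (pr (0 + k - int j) b (pr (m + int j) a x))))"
    using H N_def by auto
  have l: "(\<Sum>j<N. sm ((of_int m :: complex) gchoose j)
                    (pr (m + k - int j) (pr (0 + int j) a b) x))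
        = (\<Sum>j<J. sm ((of_int m :: complex) gchoose j) (pr (m + k - int j) (pr (int j) a b) x))"
    by (subst sum_trunc[where K=J]) (auto simp: N_def J)
  have r: "(\<Sum>j<N. sm ((-1) ^ j * ((of_int 0 :: complex) gchoose j))
                    (pr (m + 0 - int j) a (pr (k + int j) b x)
                     - sm (if even (0::int) then 1 else -1) (pr (0 + k - int j) b (pr (m + int j) a x))))
        = pr m a (pr k b x) - pr k b (pr m a x)"
    by (subst sum_trunc[where K=1]) (auto simp: N_def gbinomial_0_left)
  show ?thesis using e l r by simp
qed

end

locale w3 = va sm vac pr for sm :: "complex \<Rightarrow> 'v::ab_group_add \<Rightarrow> 'v" and vac pr +
  fixes L W :: 'v and c :: complex
  assumes hc: "c \<noteq> - 22 / 5"
    and LL3: "pr 3 L L = sm (c / 2) vac"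
    and LL2: "pr 2 L L = 0"
    and LL1: "pr 1 L L = sm 2 L"
    and LL0: "pr 0 L L = vderiv pr vac L"
    and LLhi: "\<forall>m\<ge>4. pr m L L = 0"
    and LW1: "pr 1 L W = sm 3 W"
    and LW0: "pr 0 L W = vderiv pr vac W"
    and LWhi: "\<forall>m\<ge>2. pr m L W = 0"
    and WW5: "pr 5 W W = sm (c / 3) vac"
    and WW4: "pr 4 W W = 0"
    and WW3: "pr 3 W W = sm 2 L"
    and WW2: "pr 2 W W = vderiv pr vac L"
    and WW1: "pr 1 W W = sm (32 / (22 + 5 * c)) (nop pr L L)
                          + sm (3 * (c - 2) / (2 * (22 + 5 * c))) ((vderiv pr vac ^^ 2) L)"
    and WW0: "pr 0 W W = sm (32 / (22 + 5 * c)) (nop pr (vderiv pr vac L) L)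
                          + sm ((c - 2) / (3 * (22 + 5 * c))) ((vderiv pr vac ^^ 3) L)"
    and WWhi: "\<forall>m\<ge>6. pr m W W = 0"
begin

lemma dnz: "22 + 5 * c \<noteq> 0"
proof
  assume "22 + 5 * c = 0"
  then have "c = - 22 / 5" by (simp add: field_simps add_eq_0_iff2)
  with hc show False by simp
qed

lemma de: "66 + 15 * c = 3 * (22 + 5 * c)" "44 + 10 * c = 2 * (22 + 5 * c)" "792 + 180 * c = 36 * (22 + 5 * c)"
  by simp_all

lemma dnz3: "66 + 15 * c \<noteq> 0" and dnz2: "44 + 10 * c \<noteq> 0" and dnz36: "792 + 180 * c \<noteq> 0"
proof -
  have e: "66 + 15 * c = 3 * (22 + 5 * c)" "44 + 10 * c = 2 * (22 + 5 * c)" "792 + 180 * c = 36 * (22 + 5 * c)"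
    by simp_all
  show "66 + 15 * c \<noteq> 0" using dnz e(1) by (metis mult_eq_0_iff zero_neq_numeral)
  show "44 + 10 * c \<noteq> 0" using dnz e(2) by (metis mult_eq_0_iff zero_neq_numeral)
  show "792 + 180 * c \<noteq> 0" using dnz e(3) by (metis mult_eq_0_iff zero_neq_numeral)
qed

lemma ev_cd: "(\<And>d::complex. d \<noteq> 0 \<Longrightarrow> P ((d - 22) / 5)) \<Longrightarrow> P c"
proof -
  assume H: "\<And>d::complex. d \<noteq> 0 \<Longrightarrow> P ((d - 22) / 5)"
  have "c = ((22 + 5 * c) - 22) / 5" by simp
  then show "P c" using H[OF dnz] by metis
qed

lemma RLW: "pr m L (pr k W x) = pr k W (pr m L x) + sm (of_int (2*m - k)) (pr (m+k-1) W x)"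
proof -
  have "pr m L (pr k W x) - pr k W (pr m L x)
       = (\<Sum>j<2. sm ((of_int m :: complex) gchoose j) (pr (m + k - int j) (pr (int j) L W) x))"
    by (rule comm) (use LWhi in auto)
  also have "\<dots> = sm (of_int (2*m - k)) (pr (m+k-1) W x)"
    by (simp add: eval_nat_numeral LW0 LW1 pr_D sm1 algebra_simps flip: scale_left_diff_distrib scale_left_distrib)
  finally show ?thesis by (simp add: algebra_simps)
qed

lemma RWL: "pr k W (pr m L x) = pr m L (pr k W x) + sm (of_int (k - 2*m)) (pr (k+m-1) W x)"
proof -
  have e: "(of_int (2*m - k) :: complex) = - of_int (k - 2*m)" by simp
  have Z: "sm (2 * of_int m - of_int k) z = - sm (of_int k - 2 * of_int m) z" for z
    by (metis minus_diff_eq scale_minus_left)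
  have "pr m L (pr k W x) = pr k W (pr m L x) - sm (of_int (k - 2*m)) (pr (k+m-1) W x)"
    using RLW[of m k x] by (simp add: Z add.commute)
  then show ?thesis by (simp add: algebra_simps)
qed

lemma RLL: "m + k \<noteq> 2 \<Longrightarrow> pr m L (pr k L x) = pr k L (pr m L x) + sm (of_int (m - k)) (pr (m+k-1) L x)"
proof -
  assume mk: "m + k \<noteq> 2"
  have "pr m L (pr k L x) - pr k L (pr m L x)
       = (\<Sum>j<4. sm ((of_int m :: complex) gchoose j) (pr (m + k - int j) (pr (int j) L L) x))"
    by (rule comm) (use LLhi in auto)
  also have "\<dots> = sm (of_int (m - k)) (pr (m+k-1) L x)"
    using mk by (simp add: eval_nat_numeral LL0 LL1 LL2 LL3 pr_D sm1 vacl algebra_simps flip: scale_left_diff_distrib scale_left_distrib)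
  finally show ?thesis by (simp add: algebra_simps)
qed

fun ev :: "wd \<Rightarrow> 'v" where
  "ev [] = vac"
| "ev (x#w) = pr (snd x) (if fst x then L else W) (ev w)"

definition den :: "(complex \<times> wd) list \<Rightarrow> 'v" where
  "den xs = sum_list (map (\<lambda>(a,w). sm a (ev w)) xs)"

lemma den_Nil[simp]: "den [] = 0" by (simp add: den_def)
lemma den_Cons: "den ((a,w)#xs) = sm a (ev w) + den xs" by (simp add: den_def)
lemma den_app: "den (xs @ ys) = den xs + den ys" by (simp add: den_def)
lemma den_scl: "den (scl t xs) = sm t (den xs)"
proof (induction xs)
  case Nil then show ?case by (simp add: scl_def)
next
  case (Cons p xs)
  then show ?case by (cases p) (simp add: scl_def den_Cons scale_right_distrib)
qed


definition app :: "bool \<times> int \<Rightarrow> 'v \<Rightarrow> 'v" where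
  "app x y = pr (snd x) (if fst x then L else W) y"

lemma app_add: "app x (y + z) = app x y + app x z" by (simp add: app_def add2)
lemma app_sm: "app x (sm t y) = sm t (app x y)" by (simp add: app_def sm2)
lemma app_0: "app x 0 = 0" by (simp add: app_def)
lemma app_den: "app x (den xs) = den (pfx x xs)"
proof (induction xs)
  case Nil then show ?case by (simp add: pfx_def app_0)
next
  case (Cons p xs)
  then show ?case by (cases p) (simp add: pfx_def den_Cons app_def add2 sm2)
qed

lemma den_bind2_app: "(\<And>u. den (g u) = app x (ev u)) \<Longrightarrow> den (bind2 ys g) = app x (den ys)"
proof (induction ys)
  case Nil then show ?case by (simp add: bind2_def app_0)
next
  case (Cons p ys)
  obtain a u where p: "p = (a,u)" by (cases p)
  have "den (bind2 (p#ys) g) = sm a (den (g u)) + den (bind2 ys g)"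
    by (simp add: p bind2_def den_app den_scl)
  also have "\<dots> = app x (den (p#ys))"
    using Cons by (simp add: p den_Cons app_add app_sm)
  finally show ?case .
qed

lemma ins_ok: "den (ins f x w) = app x (ev w)"
proof (induction f arbitrary: x w)
  case 0 then show ?case by (simp add: den_Cons app_def)
next
  case (Suc f)
  obtain b k where x: "x = (b,k)" by (cases x)
  show ?case
  proof (cases w)
    case Nil then show ?thesis by (auto simp: den_Cons app_def vacr)
  next
    case (Cons y w')
    obtain b' k' where y: "y = (b',k')" by (cases y)
    have B: "den (bind2 (ins f x w') (\<lambda>u. ins f y u)) = app y (app x (ev w'))"
      by (subst den_bind2_app[where x=y]) (use Suc in auto)
    show ?thesis
    proof (cases "\<not> b \<and> b'")
      case True
      then have bb: "b = False" "b' = True" by auto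
      have "den (ins (Suc f) x w) = app y (app x (ev w')) + sm (of_int (k - 2*k')) (den (ins f (False, k + k' - 1) w'))"
        using B[unfolded x y bb] by (simp add: Cons x y bb den_app den_scl)
      also have "\<dots> = app x (ev w)"
        by (simp add: Suc x y bb Cons app_def RWL)
      finally show ?thesis .
    next
      case F1: False
      show ?thesis
      proof (cases "b \<and> b' \<and> k' < k \<and> k + k' \<noteq> 2")
        case True
        then have bb: "b = True" "b' = True" "k' < k" "k + k' \<noteq> 2" by auto
        have "den (ins (Suc f) x w) = app y (app x (ev w')) + sm (of_int (k - k')) (den (ins f (True, k + k' - 1) w'))"
          using B[unfolded x y bb] by (simp add: Cons x y bb den_app den_scl)
        also have "\<dots> = app x (ev w)"
          using bb by (simp add: Suc x y Cons app_def RLL[of k k' "ev w'"])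
        finally show ?thesis .
      next
        case False
        then show ?thesis using F1 by (cases b; cases b'; auto simp add: Cons x y den_Cons app_def)
      qed
    qed
  qed
qed

lemma ev_Cons': "ev (x#w) = app x (ev w)" by (simp add: app_def)

lemma nw_ok: "den (nw f w) = ev w"
proof (induction w)
  case Nil then show ?case by (simp add: den_Cons)
next
  case (Cons x w)
  have "den (bind2 (nw f w) (\<lambda>u. ins f x u)) = app x (den (nw f w))" by (rule den_bind2_app, rule ins_ok)
  then show ?case by (simp add: Cons app_def)
qed

lemma nl_ok: "den (nl f xs) = den xs"
proof (induction xs)
  case Nil then show ?case by (simp add: nl_def bind2_def)
next
  case (Cons p xs)
  then show ?case by (cases p) (simp add: nl_def bind2_def den_app den_scl nw_ok den_Cons)
qed

lemma D_ev: "D (ev w) = den (Dw w)"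
proof (induction w)
  case Nil then show ?case by simp
next
  case (Cons x w)
  obtain b k where x: "x = (b,k)" by (cases x)
  have "D (ev (x#w)) = pr k (if b then L else W) (D (ev w)) - sm (of_int k) (pr (k-1) (if b then L else W) (ev w))"
    by (simp add: x D_pr)
  moreover have "den (Dw (x#w)) = pr k (if b then L else W) (den (Dw w)) - sm (of_int k) (pr (k-1) (if b then L else W) (ev w))"
  proof -
    have "den (Dw (x#w)) = den (pfx x (Dw w)) + sm (- of_int k) (ev ((b,k-1)#w))"
      by (simp add: x den_app den_Cons)
    also have "den (pfx x (Dw w)) = app x (den (Dw w))" by (rule app_den[symmetric])
    finally show ?thesis by (simp add: x app_def)
  qed
  ultimately show ?case using Cons by simp
qed

lemma D_den: "D (den xs) = den (Dl xs)"
proof (induction xs)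
  case Nil then show ?case by (simp add: Dl_def bind2_def)
next
  case (Cons p xs)
  then show ?case by (cases p) (simp add: Dl_def bind2_def den_app den_scl den_Cons Dadd Dsm D_ev)
qed

lemma insm_ok: "den (insm p ys) = den (p#ys)"
proof (induction p ys rule: insm.induct)
  case (1 p) then show ?case by simp
next
  case (2 p q ys)
  obtain a u where p: "p = (a,u)" by (cases p)
  obtain b v where q: "q = (b,v)" by (cases q)
  show ?case
  proof (cases "u = v")
    case True
    have "den (insm p (q#ys)) = sm (a+b) (ev v) + den ys" using True by (simp add: p q den_Cons)
    also have "\<dots> = sm a (ev u) + (sm b (ev v) + den ys)" using True by (simp add: scale_left_distrib add.assoc)
    finally show ?thesis by (simp add: p q den_Cons)
  next
    case False
    have "den (insm p (q#ys)) = sm b (ev v) + den (p # ys)" using False 2 by (simp add: p q den_Cons)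
    also have "\<dots> = sm b (ev v) + (sm a (ev u) + den ys)" by (simp add: p den_Cons)
    also have "\<dots> = sm a (ev u) + (sm b (ev v) + den ys)" by (rule add.left_commute)
    finally show ?thesis by (simp add: p q den_Cons)
  qed
qed

lemma merge_ok: "den (merge xs) = den xs"
proof (induction xs)
  case Nil then show ?case by (simp add: merge_def)
next
  case (Cons p xs)
  then show ?case by (cases p) (simp add: merge_def insm_ok den_Cons)
qed

lemma den_zero: "\<forall>p\<in>set xs. fst p = 0 \<Longrightarrow> den xs = 0"
proof (induction xs)
  case Nil then show ?case by simp
next
  case (Cons p xs)
  then show ?case by (cases p) (simp add: den_Cons)
qed

lemma gm1: "(-1) ^ j * ((-1 :: complex) gchoose j) = 1"
proof -
  have "((-1 :: complex) gchoose j) = (-1)^j * ((1 + of_nat j - 1) gchoose j)"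
    using gbinomial_minus[of "1::complex" j] by simp
  also have "(1 + of_nat j - 1 :: complex) = of_nat j" by simp
  also have "(of_nat j :: complex) gchoose j = 1"
    by (metis binomial_gbinomial binomial_n_n of_nat_1)
  finally show ?thesis by (simp flip: power_mult_distrib)
qed

lemma U0W: "pr 0 (pr (-1) W W) W =
   (\<Sum>j<6. pr (-1 - int j) W (pr (int j) W W) + pr (-1 - int j) W (pr (int j) W W))"
proof -
  obtain N0 where H: "\<forall>N\<ge>N0.
        (\<Sum>j<N. sm ((of_int 0 :: complex) gchoose j)
                    (pr (0 + 0 - int j) (pr (-1 + int j) W W) W))
        = (\<Sum>j<N. sm ((-1) ^ j * ((of_int (-1) :: complex) gchoose j))
                    (pr (0 + (-1) - int j) W (pr (0 + int j) W W)
                     - sm (if even (-1::int) then 1 else -1) (pr ((-1) + 0 - int j) W (pr (0 + int j) W W))))"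
    using borch[of 0 0 "-1" W W W] by blast
  define N where "N = max N0 6"
  have e: "(\<Sum>j<N. sm ((of_int 0 :: complex) gchoose j)
                    (pr (0 + 0 - int j) (pr (-1 + int j) W W) W))
        = (\<Sum>j<N. sm ((-1) ^ j * ((of_int (-1) :: complex) gchoose j))
                    (pr (0 + (-1) - int j) W (pr (0 + int j) W W)
                     - sm (if even (-1::int) then 1 else -1) (pr ((-1) + 0 - int j) W (pr (0 + int j) W W))))"
    using H N_def by auto
  have l: "(\<Sum>j<N. sm ((of_int 0 :: complex) gchoose j)
                    (pr (0 + 0 - int j) (pr (-1 + int j) W W) W)) = pr 0 (pr (-1) W W) W"
    by (subst sum_trunc[where K=1]) (auto simp: gbinomial_0_left N_def)
  have r: "(\<Sum>j<N. sm ((-1) ^ j * ((of_int (-1) :: complex) gchoose j))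
                    (pr (0 + (-1) - int j) W (pr (0 + int j) W W)
                     - sm (if even (-1::int) then 1 else -1) (pr ((-1) + 0 - int j) W (pr (0 + int j) W W))))
     = (\<Sum>j<6. pr (-1 - int j) W (pr (int j) W W) + pr (-1 - int j) W (pr (int j) W W))"
  proof -
    have "(\<Sum>j<N. sm ((-1) ^ j * ((of_int (-1) :: complex) gchoose j))
                    (pr (0 + (-1) - int j) W (pr (0 + int j) W W)
                     - sm (if even (-1::int) then 1 else -1) (pr ((-1) + 0 - int j) W (pr (0 + int j) W W))))
        = (\<Sum>j<N. pr (-1 - int j) W (pr (int j) W W) + pr (-1 - int j) W (pr (int j) W W))"
      by (rule sum.cong) (simp_all add: gm1)
    also have "\<dots> = (\<Sum>j<6. pr (-1 - int j) W (pr (int j) W W) + pr (-1 - int j) W (pr (int j) W W))"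
      by (rule sum_trunc) (use WWhi N_def in auto)
    finally show ?thesis .
  qed
  show ?thesis using e l r by simp
qed

lemma prW_den: "pr k W (den xs) = den (pfx (False,k) xs)"
  using app_den[of "(False,k)" xs] by (simp add: app_def)
lemma den_sub_sm: "den xs - sm a (den ys) = den (xs @ scl (-a) ys)"
  by (simp add: den_app den_scl)
lemma den_add_sm: "den xs + sm a (den ys) = den (xs @ scl a ys)"
  by (simp add: den_app den_scl)
lemma dL: "L = den [(1,[(True,-1)])]" by (simp add: den_Cons vacm1)
lemma dW: "W = den [(1,[(False,-1)])]" by (simp add: den_Cons vacm1)

lemma WW0d: "pr 0 W W = den ([(32 / (22 + 5 * c), [(True,-2),(True,-1)])] @
     scl ((c - 2) / (3 * (22 + 5 * c))) (Dl (Dl (Dl [(1,[(True,-1)])]))))"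
proof -
  have "nop pr (D L) L = pr (-2) L L" by (simp add: nop_def pr_D)
  moreover have "den (Dl (Dl (Dl [(1,[(True,-1)])]))) = (D ^^ 3) L"
    by (simp add: D_den[symmetric] numeral_3_eq_3 flip: dL)
  ultimately show ?thesis by (simp add: WW0 den_app den_scl den_Cons vacm1)
qed

lemma WW1d: "pr 1 W W = den ([(32 / (22 + 5 * c), [(True,-1),(True,-1)])] @
     scl (3 * (c - 2) / (2 * (22 + 5 * c))) (Dl (Dl [(1,[(True,-1)])])))"
proof -
  have "den (Dl (Dl [(1,[(True,-1)])])) = (D ^^ 2) L"
    by (simp add: D_den[symmetric] numeral_2_eq_2 flip: dL)
  then show ?thesis by (simp add: WW1 den_app den_scl den_Cons vacm1 nop_def)
qed

lemma WW2d: "pr 2 W W = den (Dl [(1,[(True,-1)])])"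
  by (simp add: D_den[symmetric] WW2 flip: dL)
lemma WW3d: "pr 3 W W = den [(2,[(True,-1)])]"
  by (simp add: WW3 den_Cons vacm1)
lemma WW4d: "pr 4 W W = den []" by (simp add: WW4)
lemma WW5d: "pr 5 W W = den [(c/3,[])]" by (simp add: WW5 den_Cons)

lemma U0d: "pr 0 (nop pr W W) W = den (
    pfx (False,-1) ([(32 / (22 + 5 * c), [(True,-2),(True,-1)])] @
     scl ((c - 2) / (3 * (22 + 5 * c))) (Dl (Dl (Dl [(1,[(True,-1)])])))) @
    pfx (False,-1) ([(32 / (22 + 5 * c), [(True,-2),(True,-1)])] @
     scl ((c - 2) / (3 * (22 + 5 * c))) (Dl (Dl (Dl [(1,[(True,-1)])])))) @
    pfx (False,-2) ([(32 / (22 + 5 * c), [(True,-1),(True,-1)])] @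
     scl (3 * (c - 2) / (2 * (22 + 5 * c))) (Dl (Dl [(1,[(True,-1)])]))) @
    pfx (False,-2) ([(32 / (22 + 5 * c), [(True,-1),(True,-1)])] @
     scl (3 * (c - 2) / (2 * (22 + 5 * c))) (Dl (Dl [(1,[(True,-1)])]))) @
    pfx (False,-3) (Dl [(1,[(True,-1)])]) @ pfx (False,-3) (Dl [(1,[(True,-1)])]) @
    pfx (False,-4) [(2,[(True,-1)])] @ pfx (False,-4) [(2,[(True,-1)])] @
    pfx (False,-5) [] @ pfx (False,-5) [] @
    pfx (False,-6) [(c/3,[])] @ pfx (False,-6) [(c/3,[])])"
proof -
  have S: "pr 0 (nop pr W W) W =
     pr (-1) W (pr 0 W W) + (pr (-1) W (pr 0 W W) + (pr (-2) W (pr 1 W W) + (pr (-2) W (pr 1 W W) +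
     (pr (-3) W (pr 2 W W) + (pr (-3) W (pr 2 W W) + (pr (-4) W (pr 3 W W) + (pr (-4) W (pr 3 W W) +
     (pr (-5) W (pr 4 W W) + (pr (-5) W (pr 4 W W) + (pr (-6) W (pr 5 W W) + pr (-6) W (pr 5 W W)))))))))))"
    by (simp add: nop_def U0W eval_nat_numeral add.assoc)
  show ?thesis
    unfolding S
    by (simp only: WW0d WW1d WW2d WW3d WW4d WW5d prW_den den_app[symmetric])
qed

lemma T1: "D (nop pr L (nop pr L W)) = den (Dl [(1,[(True,-1),(True,-1),(False,-1)])])"
  by (simp add: D_den[symmetric] den_Cons vacm1 nop_def)
lemma T2: "nop pr (D L) (nop pr L W) = den [(1,[(True,-2),(True,-1),(False,-1)])]"
  by (simp add: den_Cons vacm1 nop_def pr_D)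
lemma T3: "(D^^3) (nop pr L W) = den (Dl (Dl (Dl [(1,[(True,-1),(False,-1)])])))"
  by (simp add: D_den[symmetric] den_Cons vacm1 nop_def numeral_3_eq_3)
lemma T4: "(D^^2) (nop pr (D L) W) = den (Dl (Dl [(1,[(True,-2),(False,-1)])]))"
  by (simp add: D_den[symmetric] den_Cons vacm1 nop_def numeral_2_eq_2 pr_D)
lemma T5: "D (nop pr ((D^^2) L) W) = den (Dl [(2,[(True,-3),(False,-1)])])"
  by (simp add: D_den[symmetric] den_Cons vacm1 nop_def numeral_2_eq_2 pr_D)
lemma T6: "nop pr ((D^^3) L) W = den [(6,[(True,-4),(False,-1)])]"
  by (simp add: den_Cons vacm1 nop_def numeral_3_eq_3 pr_D)
lemma T7: "(D^^5) W = den (Dl (Dl (Dl (Dl (Dl [(1,[(False,-1)])])))))"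
  by (simp add: D_den[symmetric] den_Cons vacm1 eval_nat_numeral)

lemma main1: "pr 0 (nop pr W W) W
         - sm (64 / (22 + 5 * c)) (D (nop pr L (nop pr L W)))
         + sm (64 / (22 + 5 * c)) (nop pr (D L) (nop pr L W))
         - sm (10 * (14 + c) / (3 * (22 + 5 * c))) ((D ^^ 3) (nop pr L W))
         + sm ((86 + 5 * c) / (22 + 5 * c)) ((D ^^ 2) (nop pr (D L) W))
         - sm ((26 + 3 * c) / (22 + 5 * c)) (D (nop pr ((D ^^ 2) L) W))
         + sm (2 * (c - 2) / (3 * (22 + 5 * c))) (nop pr ((D ^^ 3) L) W)
         - sm ((-186 + 11 * c + c ^ 2) / (36 * (22 + 5 * c))) ((D ^^ 5) W)
         = 0"
  apply (simp only: U0d T1 T2 T3 T4 T5 T6 T7 den_sub_sm den_add_sm)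
  apply (subst nl_ok[symmetric, where f=fuel])
  apply (subst merge_ok[symmetric])
  apply (rule den_zero)
  apply (simp add: merge_def nl_def fuel_def Dl_def)
  apply (rule ev_cd)
  apply (simp add: field_simps power2_eq_square)
  done

lemma Dpow_add: "(D^^m) (x + y) = (D^^m) x + (D^^m) y"
  by (induction m) (auto simp: Dadd)
lemma Dpow_diff: "(D^^m) (x - y) = (D^^m) x - (D^^m) y"
  by (induction m) (auto simp: Ddiff)
lemma Dpow_sm: "(D^^m) (sm t x) = sm t ((D^^m) x)"
  by (induction m) (auto simp: Dsm)
lemma Dpow_0: "(D^^m) 0 = 0"
  by (induction m) auto
lemma pr0D: "pr 0 a (D y) = D (pr 0 a y)" by (simp add: D_pr)
lemma Dpow_pr0: "pr 0 a ((D^^m) x) = (D^^m) (pr 0 a x)"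
  by (induction m) (auto simp: pr0D)

end

theorem lemma7p2:
  fixes sm :: "complex \<Rightarrow> 'v::ab_group_add \<Rightarrow> 'v"
    and vac :: 'v and pr :: "int \<Rightarrow> 'v \<Rightarrow> 'v \<Rightarrow> 'v"
    and L W :: 'v and c :: complex and n :: nat
  defines "D \<equiv> vderiv pr vac"
    and "NO \<equiv> nop pr"
  assumes VA: "vertex_algebra sm vac pr"
    and hc: "c \<noteq> - 22 / 5"
    \<comment> \<open>L(z)L(w) OPE\<close>
    and LL3: "pr 3 L L = sm (c / 2) vac"
    and LL2: "pr 2 L L = 0"
    and LL1: "pr 1 L L = sm 2 L"
    and LL0: "pr 0 L L = D L"
    and LLhi: "\<forall>m\<ge>4. pr m L L = 0"
    \<comment> \<open>L(z)W(w) OPE\<close>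
    and LW1: "pr 1 L W = sm 3 W"
    and LW0: "pr 0 L W = D W"
    and LWhi: "\<forall>m\<ge>2. pr m L W = 0"
    \<comment> \<open>W(z)W(w) OPE\<close>
    and WW5: "pr 5 W W = sm (c / 3) vac"
    and WW4: "pr 4 W W = 0"
    and WW3: "pr 3 W W = sm 2 L"
    and WW2: "pr 2 W W = D L"
    and WW1: "pr 1 W W = sm (32 / (22 + 5 * c)) (NO L L)
                          + sm (3 * (c - 2) / (2 * (22 + 5 * c))) ((D ^^ 2) L)"
    and WW0: "pr 0 W W = sm (32 / (22 + 5 * c)) (NO (D L) L)
                          + sm ((c - 2) / (3 * (22 + 5 * c))) ((D ^^ 3) L)"
    and WWhi: "\<forall>m\<ge>6. pr m W W = 0"
    and hn: "n \<ge> 1"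
  shows "pr 0 (NO W W) ((D ^^ (n - 1)) W)
         - sm (64 / (22 + 5 * c)) ((D ^^ n) (NO L (NO L W)))
         + sm (64 / (22 + 5 * c)) ((D ^^ (n - 1)) (NO (D L) (NO L W)))
         - sm (10 * (14 + c) / (3 * (22 + 5 * c))) ((D ^^ (n + 2)) (NO L W))
         + sm ((86 + 5 * c) / (22 + 5 * c)) ((D ^^ (n + 1)) (NO (D L) W))
         - sm ((26 + 3 * c) / (22 + 5 * c)) ((D ^^ n) (NO ((D ^^ 2) L) W))
         + sm (2 * (c - 2) / (3 * (22 + 5 * c))) ((D ^^ (n - 1)) (NO ((D ^^ 3) L) W))
         - sm ((-186 + 11 * c + c ^ 2) / (36 * (22 + 5 * c))) ((D ^^ (n + 4)) W)
         = 0"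
proof -
  interpret w3 sm vac pr L W c
    by (rule w3.intro[OF va.intro[OF VA]], unfold_locales)
       (use hc LL3 LL2 LL1 LL0 LLhi LW1 LW0 LWhi WW5 WW4 WW3 WW2 WW1 WW0 WWhi in
        \<open>simp_all add: D_def NO_def\<close>)
  obtain m where m: "n = Suc m" using hn by (cases n) auto
  have s2: "(D ^^ (n + 2)) x = (D ^^ m) ((D ^^ 3) x)" for x
  proof -
    have "n + 2 = m + 3" using m by simp
    then show ?thesis by (simp only: funpow_add comp_def)
  qed
  have s3: "(D ^^ (n + 1)) x = (D ^^ m) ((D ^^ 2) x)" for x
  proof -
    have "n + 1 = m + 2" using m by simp
    then show ?thesis by (simp only: funpow_add comp_def)
  qed
  have s4: "(D ^^ (n + 4)) x = (D ^^ m) ((D ^^ 5) x)" for x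
  proof -
    have "n + 4 = m + 5" using m by simp
    then show ?thesis by (simp only: funpow_add comp_def)
  qed
  have s1: "(D ^^ n) x = (D ^^ m) (D x)" for x
    by (simp only: m funpow_Suc_right comp_def)
  have s0: "n - 1 = m" using m by simp
  have E: "(vderiv pr vac ^^ m) (pr 0 (nop pr W W) W
         - sm (64 / (22 + 5 * c)) (vderiv pr vac (nop pr L (nop pr L W)))
         + sm (64 / (22 + 5 * c)) (nop pr (vderiv pr vac L) (nop pr L W))
         - sm (10 * (14 + c) / (3 * (22 + 5 * c))) ((vderiv pr vac ^^ 3) (nop pr L W))
         + sm ((86 + 5 * c) / (22 + 5 * c)) ((vderiv pr vac ^^ 2) (nop pr (vderiv pr vac L) W))
         - sm ((26 + 3 * c) / (22 + 5 * c)) (vderiv pr vac (nop pr ((vderiv pr vac ^^ 2) L) W))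
         + sm (2 * (c - 2) / (3 * (22 + 5 * c))) (nop pr ((vderiv pr vac ^^ 3) L) W)
         - sm ((-186 + 11 * c + c ^ 2) / (36 * (22 + 5 * c))) ((vderiv pr vac ^^ 5) W)) = 0"
    by (simp only: main1 Dpow_0)
  show ?thesis
    unfolding s0 s1 s2 s3 s4
    using E unfolding D_def NO_def
    by (simp only: Dpow_add Dpow_diff Dpow_sm Dpow_pr0[symmetric])
qed

end
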